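(* Let $n\ge 2$. Every equilibrium graph $G$ of $(1,1,\dots,1)$-BG (all $n$ budgets equal to $1$) in the MAX version has connected underlying graph $U(G)$, $U(G)$ has a unique cycle, this cycle has at most $7$ vertices, and every vertex is within distance $2$ in $U(G)$ of the cycle.
   Context: Bounded budget network creation game $(b_1,\dots,b_n)$-BG: $n$ players with integer budgets $0\le b_i\le n-1$. A strategy of player $i$ is a set $S_i\subseteq\{1,\dots,n\}\setminus\{i\}$ with $|S_i|=b_i$; a profile is realized by the directed graph $G$ on $u_1,\dots,u_n$ with an arc $\overrightarrow{u_iu_j}$ iff $j\in S_i$. $U(G)$ is the undirected multigraph obtained by ignoring directions; if both $\overrightarrow{uv}$ and $\overrightarrow{vu}$ are arcs (a brace), $uv$ is a double edge of $U(G)$, regarded as a cycle with 2 vertices. $\operatorname{dist}(u,v)$ is the distance in $U(G)$, defined as $n^2$ between different components. MAX cost: $c_{MAX}(u)=\max_v\operatorname{dist}(u,v)+(\kappa-1)n^2$, $\kappa$ the number of components of $U(G)$. An equilibrium graph in the MAX version is a realization in which no vertex can decrease its MAX cost by changing its own strategy while the others are fixed. *)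

theory Defs
  imports Main
begin

text \<open>Players/vertices are 0,...,n-1. A strategy profile S assigns to every player i
  a set S i of other players; the realization G has an arc (i,j) iff j is in S i.\<close>

definition valid_profile :: "nat \<Rightarrow> (nat \<Rightarrow> nat) \<Rightarrow> (nat \<Rightarrow> nat set) \<Rightarrow> bool" where
  "valid_profile n b S \<longleftrightarrow>
     (\<forall>i<n. S i \<subseteq> {0..<n} - {i} \<and> card (S i) = b i)"

definition arcs :: "nat \<Rightarrow> (nat \<Rightarrow> nat set) \<Rightarrow> (nat \<times> nat) set" where
  "arcs n S = {(i, j). i < n \<and> j \<in> S i}"

text \<open>Adjacency in the underlying multigraph U(G) (ignoring multiplicities).\<close>
definition adjU :: "nat \<Rightarrow> (nat \<Rightarrow> nat set) \<Rightarrow> (nat \<times> nat) set" where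
  "adjU n S = {(u, v). u < n \<and> v < n \<and> ((u, v) \<in> arcs n S \<or> (v, u) \<in> arcs n S)}"

definition distU :: "nat \<Rightarrow> (nat \<Rightarrow> nat set) \<Rightarrow> nat \<Rightarrow> nat \<Rightarrow> nat" where
  "distU n S u v =
     (if \<exists>k. (u, v) \<in> adjU n S ^^ k then (LEAST k. (u, v) \<in> adjU n S ^^ k) else n ^ 2)"

definition num_components :: "nat \<Rightarrow> (nat \<Rightarrow> nat set) \<Rightarrow> nat" where
  "num_components n S = card ({0..<n} // ((adjU n S)\<^sup>* \<inter> ({0..<n} \<times> {0..<n})))"

definition connectedU :: "nat \<Rightarrow> (nat \<Rightarrow> nat set) \<Rightarrow> bool" where
  "connectedU n S \<longleftrightarrow> (\<forall>u<n. \<forall>v<n. (u, v) \<in> (adjU n S)\<^sup>*)"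

definition cost_max :: "nat \<Rightarrow> (nat \<Rightarrow> nat set) \<Rightarrow> nat \<Rightarrow> nat" where
  "cost_max n S u = Max ((\<lambda>v. distU n S u v) ` {0..<n}) + (num_components n S - 1) * n ^ 2"

definition max_equilibrium :: "nat \<Rightarrow> (nat \<Rightarrow> nat) \<Rightarrow> (nat \<Rightarrow> nat set) \<Rightarrow> bool" where
  "max_equilibrium n b S \<longleftrightarrow> valid_profile n b S \<and>
     (\<forall>u<n. \<forall>T. T \<subseteq> {0..<n} - {u} \<and> card T = b u \<longrightarrow>
        cost_max n S u \<le> cost_max n (S(u := T)) u)"

text \<open>Cycles of the multigraph U(G): the edges of U(G) are the arcs of G (so a brace is
  a pair of parallel edges).\<close>
definition joins :: "nat \<times> nat \<Rightarrow> nat \<Rightarrow> nat \<Rightarrow> bool" where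
  "joins e a c \<longleftrightarrow> e = (a, c) \<or> e = (c, a)"

definition is_cycleU :: "nat \<Rightarrow> (nat \<Rightarrow> nat set) \<Rightarrow> nat set \<Rightarrow> (nat \<times> nat) set \<Rightarrow> bool" where
  "is_cycleU n S V E \<longleftrightarrow>
     (\<exists>vs es. length vs \<ge> 2 \<and> length es = length vs \<and> distinct vs \<and> distinct es \<and>
        set vs \<subseteq> {0..<n} \<and> set es \<subseteq> arcs n S \<and> set vs = V \<and> set es = E \<and>
        (\<forall>j < length vs. joins (es ! j) (vs ! j) (vs ! (Suc j mod length vs))))"

end

theory Submission
  imports Defs
begin

definition Adj :: "nat \<Rightarrow> (nat \<Rightarrow> nat) \<Rightarrow> (nat \<times> nat) set" where
  "Adj n h = {(a,b). a < n \<and> b < n \<and> (b = h a \<or> a = h b)}"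

definition gd :: "(nat \<times> nat) set \<Rightarrow> nat \<Rightarrow> nat \<Rightarrow> nat \<Rightarrow> nat" where
  "gd R N a b = (if \<exists>k. (a,b) \<in> R ^^ k then (LEAST k. (a,b) \<in> R ^^ k) else N)"

lemma distU_gd: "distU n S u v = gd (adjU n S) (n^2) u v"
  unfolding distU_def gd_def by simp

lemma adjU_Adj:
  assumes "\<And>i. i < n \<Longrightarrow> S i = {h i}"
  shows "adjU n S = Adj n h"
  using assms unfolding adjU_def arcs_def Adj_def by auto

lemma Adj_sym: "(a,b) \<in> Adj n h \<Longrightarrow> (b,a) \<in> Adj n h"
  unfolding Adj_def by auto

lemma Adj_sub: "Adj n h \<subseteq> {0..<n} \<times> {0..<n}"
  unfolding Adj_def by auto

lemma Adj_edge: "a < n \<Longrightarrow> h a < n \<Longrightarrow> (a, h a) \<in> Adj n h"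
  unfolding Adj_def by auto

lemma Adj_edge': "a < n \<Longrightarrow> h a < n \<Longrightarrow> (h a, a) \<in> Adj n h"
  unfolding Adj_def by auto

lemma relpow_sym:
  assumes "\<And>a b. (a,b) \<in> R \<Longrightarrow> (b,a) \<in> R"
  shows "(a,b) \<in> R ^^ k \<Longrightarrow> (b,a) \<in> R ^^ k"
proof (induction k arbitrary: b)
  case 0 then show ?case by simp
next
  case (Suc k)
  then obtain y where "(a,y) \<in> R ^^ k" "(y,b) \<in> R" by auto
  then show ?case using Suc.IH assms by (meson relpow_Suc_I2)
qed

lemma relpow_trans: "(a,b) \<in> R ^^ k \<Longrightarrow> (b,c) \<in> R ^^ m \<Longrightarrow> (a,c) \<in> R ^^ (k+m)"
  by (auto simp: relpow_add)

lemma gd_le: "(a,b) \<in> R ^^ k \<Longrightarrow> gd R N a b \<le> k"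
  unfolding gd_def by (auto intro: Least_le)

lemma gd_reach: "(a,b) \<in> R ^^ k \<Longrightarrow> (a,b) \<in> R ^^ (gd R N a b)"
  unfolding gd_def by (auto intro: LeastI)

lemma gd_zero: assumes "(a,b) \<in> R ^^ k" "gd R N a b = 0" shows "a = b"
  using gd_reach[OF assms(1), of N] assms(2) by simp

lemma gd_pred:
  assumes "(a,x) \<in> R ^^ k" "gd R N a x = Suc j"
  shows "\<exists>y. gd R N a y = j \<and> (y,x) \<in> R \<and> (a,y) \<in> R ^^ j"
proof -
  have "(a,x) \<in> R ^^ Suc j" using gd_reach[OF assms(1), of N] assms(2) by simp
  then obtain y where y: "(a,y) \<in> R ^^ j" "(y,x) \<in> R" by auto
  have "gd R N a y \<le> j" using gd_le[OF y(1)] .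
  moreover have "gd R N a y \<ge> j"
  proof (rule ccontr)
    assume "\<not> j \<le> gd R N a y"
    then have lt: "gd R N a y < j" by simp
    have "(a,y) \<in> R ^^ gd R N a y" using gd_reach[OF y(1)] .
    then have "(a,x) \<in> R ^^ Suc (gd R N a y)" using y(2) by auto
    then have "gd R N a x \<le> Suc (gd R N a y)" by (rule gd_le)
    then show False using lt assms(2) by simp
  qed
  ultimately show ?thesis using y by auto
qed

lemma lipschitz_relpow:
  fixes \<phi> :: "nat \<Rightarrow> int"
  assumes "\<And>a b. (a,b) \<in> R \<Longrightarrow> \<phi> b \<le> \<phi> a + 1"
  shows "(a,b) \<in> R ^^ k \<Longrightarrow> \<phi> b \<le> \<phi> a + int k"
proof (induction k arbitrary: b)
  case 0 then show ?case by simp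
next
  case (Suc k)
  then obtain y where "(a,y) \<in> R ^^ k" "(y,b) \<in> R" by auto
  then show ?case using Suc.IH assms[of y b] by fastforce
qed

lemma gd_lower:
  fixes \<phi> :: "nat \<Rightarrow> int"
  assumes "\<And>a b. (a,b) \<in> R \<Longrightarrow> \<phi> b \<le> \<phi> a + 1" "(a,b) \<in> R ^^ k"
  shows "\<phi> b - \<phi> a \<le> int (gd R N a b)"
  using lipschitz_relpow[of R \<phi>, OF assms(1) gd_reach[OF assms(2), of N]] by simp

lemma gd_bound:
  assumes "R \<subseteq> {0..<n} \<times> {0..<n}"
  shows "gd R (n^2) a b \<le> n^2"
proof (cases "\<exists>k. (a,b) \<in> R ^^ k")
  case True
  have fin: "finite R" using assms finite_subset by blast
  have "card R \<le> card ({0..<n} \<times> {0..<n})" using assms by (intro card_mono) auto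
  then have cR: "card R \<le> n^2" by (simp add: power2_eq_square)
  from True have "(a,b) \<in> R\<^sup>*" by (auto simp: rtrancl_power)
  then obtain k where k: "k \<le> card R" "(a,b) \<in> R ^^ k"
    using rtrancl_finite_eq_relpow[OF fin] by auto
  then show ?thesis using gd_le[OF k(2), of "n^2"] cR by simp
next
  case False then show ?thesis unfolding gd_def by simp
qed

locale fg =
  fixes n :: nat and f :: "nat \<Rightarrow> nat"
  assumes f_lt: "i < n \<Longrightarrow> f i < n" and f_ne: "i < n \<Longrightarrow> f i \<noteq> i"
begin

lemma iter_lt: "x < n \<Longrightarrow> (f^^k) x < n"
  by (induction k) (auto simp: f_lt)

lemma iter_Suc': "(f^^Suc k) x = (f^^k) (f x)"
  by (simp add: funpow_swap1)

definition periodic :: "nat \<Rightarrow> bool" where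
  "periodic x \<longleftrightarrow> (\<exists>k>0. (f^^k) x = x)"

definition per :: "nat \<Rightarrow> nat" where
  "per x = (LEAST k. 0 < k \<and> (f^^k) x = x)"

lemma per_props: assumes "periodic x" shows "0 < per x" "(f^^per x) x = x"
proof -
  from assms obtain k where "0 < k \<and> (f^^k) x = x" unfolding periodic_def by auto
  then have "0 < per x \<and> (f^^per x) x = x" unfolding per_def by (rule LeastI)
  then show "0 < per x" "(f^^per x) x = x" by auto
qed

lemma per_min: "0 < j \<Longrightarrow> j < per x \<Longrightarrow> (f^^j) x \<noteq> x"
  unfolding per_def using not_less_Least by blast

lemma funpow_mult: "(f^^p) x = x \<Longrightarrow> (f^^(p*m)) x = x"
proof (induction m)
  case 0 then show ?case by simp
next
  case (Suc m)
  have "(f^^(p * Suc m)) x = (f^^p) ((f^^(p*m)) x)" by (simp add: funpow_add)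
  then show ?case using Suc by simp
qed

lemma funpow_mod: assumes "periodic x" shows "(f^^j) x = (f^^(j mod per x)) x"
proof -
  have "(f^^j) x = (f^^(j mod per x + per x * (j div per x))) x" by (simp only: mod_mult_div_eq)
  also have "\<dots> = (f^^(j mod per x)) ((f^^(per x * (j div per x))) x)"
    by (simp only: funpow_add o_apply)
  also have "\<dots> = (f^^(j mod per x)) x" using funpow_mult per_props(2)[OF assms] by simp
  finally show ?thesis .
qed

lemma periodic_f: "periodic x \<Longrightarrow> periodic (f x)"
  unfolding periodic_def by (metis funpow_swap1)

lemma periodic_iter: "periodic x \<Longrightarrow> periodic ((f^^k) x)"
  by (induction k) (auto simp: periodic_f)

lemma per_ge2: assumes "x < n" "periodic x" shows "2 \<le> per x"
proof -
  have "per x \<noteq> 1" using per_props(2)[OF assms(2)] f_ne[OF assms(1)] by auto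
  then show ?thesis using per_props(1)[OF assms(2)] by linarith
qed

lemma iter_inj_aux:
  assumes "periodic x" "a < b" "b < per x" "(f^^a) x = (f^^b) x"
  shows False
proof -
  have e: "per x - b + b = per x" using assms(3) by simp
  have "(f^^(per x - b + a)) x = (f^^(per x - b)) ((f^^a) x)" by (simp only: funpow_add o_apply)
  also have "\<dots> = (f^^(per x - b)) ((f^^b) x)" by (simp only: assms(4))
  also have "\<dots> = (f^^(per x - b + b)) x" by (simp only: funpow_add o_apply)
  also have "\<dots> = x" by (simp only: e per_props(2)[OF assms(1)])
  finally have 3: "(f^^(per x - b + a)) x = x" .
  have 1: "0 < per x - b + a" using assms(2,3) by linarith
  have 2: "per x - b + a < per x" using assms(2,3) by linarith
  show False using per_min[OF 1 2] 3 by contradiction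
qed

lemma iter_inj:
  assumes "periodic x" "a < per x" "b < per x" "(f^^a) x = (f^^b) x"
  shows "a = b"
proof (cases a b rule: linorder_cases)
  case less then show ?thesis using iter_inj_aux[OF assms(1), of a b] assms by blast
next
  case greater then show ?thesis using iter_inj_aux[OF assms(1), of b a] assms by simp
qed simp

lemma ex_periodic: assumes "x < n" shows "\<exists>k. periodic ((f^^k) x)"
proof -
  let ?g = "\<lambda>k. (f^^k) x"
  have "?g ` {0..n} \<subseteq> {0..<n}" using iter_lt[OF assms] by auto
  then have "card (?g ` {0..n}) \<le> n" using card_mono[of "{0..<n}"] by fastforce
  then have "\<not> inj_on ?g {0..n}" using card_image[of ?g "{0..n}"] by auto
  then obtain i j where ij: "i \<le> n" "j \<le> n" "i \<noteq> j" "(f^^i) x = (f^^j) x"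
    unfolding inj_on_def by auto
  have *: "periodic ((f^^i) x)" if "i < j" "(f^^i) x = (f^^j) x" for i j
  proof -
    have "(f^^(j - i)) ((f^^i) x) = (f^^(j - i + i)) x" by (simp only: funpow_add o_apply)
    also have "j - i + i = j" using that(1) by simp
    finally have "(f^^(j - i)) ((f^^i) x) = (f^^i) x" using that(2) by simp
    then show "periodic ((f^^i) x)" using that(1) unfolding periodic_def
      by (intro exI[of _ "j-i"]) simp
  qed
  show ?thesis
  proof (cases "i < j")
    case True then show ?thesis using *[OF True ij(4)] by blast
  next
    case False then have "j < i" using ij(3) by simp
    then show ?thesis using *[OF \<open>j < i\<close> ij(4)[symmetric]] by blast
  qed
qed

definition depth :: "nat \<Rightarrow> nat" where
  "depth x = (LEAST k. periodic ((f^^k) x))"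

definition root :: "nat \<Rightarrow> nat" where
  "root x = (f^^(depth x)) x"

lemma root_periodic: "x < n \<Longrightarrow> periodic (root x)"
  unfolding root_def depth_def using ex_periodic by (auto intro: LeastI_ex)

lemma root_lt: "x < n \<Longrightarrow> root x < n"
  unfolding root_def by (rule iter_lt)

lemma depth_per: "periodic x \<Longrightarrow> depth x = 0"
  unfolding depth_def by (simp add: Least_eq_0)

lemma root_per: "periodic x \<Longrightarrow> root x = x"
  unfolding root_def using depth_per by simp

lemma depth_pos: "x < n \<Longrightarrow> \<not> periodic x \<Longrightarrow> 0 < depth x"
  using root_periodic[of x] unfolding root_def by (cases "depth x") auto

lemma depth_f: assumes "x < n" "\<not> periodic x"
  shows "depth x = Suc (depth (f x))" "root (f x) = root x"
proof -
  obtain k where k: "periodic ((f^^k) x)" using ex_periodic[OF assms(1)] by auto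
  have "depth x = Suc (LEAST m. periodic ((f^^Suc m) x))"
    unfolding depth_def by (rule Least_Suc[of "\<lambda>m. periodic ((f^^m) x)", OF k]) (use assms(2) in simp)
  also have "(\<lambda>m. periodic ((f^^Suc m) x)) = (\<lambda>m. periodic ((f^^m) (f x)))"
    by (simp only: iter_Suc')
  finally show 1: "depth x = Suc (depth (f x))" unfolding depth_def by simp
  show "root (f x) = root x" unfolding root_def 1 iter_Suc' ..
qed

lemma nonper_below_depth: "k < depth x \<Longrightarrow> \<not> periodic ((f^^k) x)"
  unfolding depth_def using not_less_Least by blast

definition conn :: bool where
  "conn \<longleftrightarrow> (\<forall>a<n. \<forall>b<n. (a,b) \<in> (Adj n f)\<^sup>*)"

lemma basin:
  assumes "(y,z) \<in> (Adj n f)\<^sup>*"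
  shows "\<exists>k j. (f^^k) z = (f^^j) y"
  using assms
proof (induction rule: rtrancl_induct)
  case base
  then show ?case by (rule exI[of _ 0], rule exI[of _ 0]) simp
next
  case (step z z')
  then obtain k j where kj: "(f^^k) z = (f^^j) y" by auto
  from step(2) have "z' = f z \<or> z = f z'" unfolding Adj_def by auto
  then show ?case
  proof
    assume "z' = f z"
    then have "(f^^k) z' = f ((f^^k) z)" by (simp add: funpow_swap1)
    then have "(f^^k) z' = (f^^Suc j) y" using kj by simp
    then show ?thesis by blast
  next
    assume "z = f z'"
    moreover have "(f^^Suc k) z' = (f^^k) (f z')" by (rule iter_Suc')
    ultimately have "(f^^Suc k) z' = (f^^j) y" using kj by simp
    then show ?thesis by blast
  qed
qed

lemma cyc_conn:
  assumes "conn" "y < n" "z < n" "periodic z"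
  shows "\<exists>j. z = (f^^j) y"
proof -
  have "(y,z) \<in> (Adj n f)\<^sup>*" using assms(1,2,3) unfolding conn_def by blast
  from basin[OF this] obtain k j where kj: "(f^^k) z = (f^^j) y" by blast
  let ?p = "per z"
  have "k \<le> ?p * k" using per_props(1)[OF assms(4)] by simp
  have "(f^^(?p*k)) z = z" by (rule funpow_mult[OF per_props(2)[OF assms(4)]])
  then have "z = (f^^(?p*k)) z" by simp
  also have "\<dots> = (f^^(?p*k - k + k)) z" using \<open>k \<le> ?p*k\<close> by simp
  also have "\<dots> = (f^^(?p*k - k)) ((f^^k) z)" by (simp only: funpow_add o_apply)
  also have "\<dots> = (f^^(?p*k - k + j)) y" using kj by (simp add: funpow_add)
  finally show ?thesis by (rule exI)
qed

lemma cyc_conn_lt: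
  assumes "conn" "y < n" "periodic y" "z < n" "periodic z"
  shows "\<exists>j<per y. z = (f^^j) y"
proof -
  obtain j where "z = (f^^j) y" using cyc_conn assms by blast
  then have "z = (f^^(j mod per y)) y" using funpow_mod[OF assms(3)] by simp
  then show ?thesis using per_props(1)[OF assms(3)] by (intro exI[of _ "j mod per y"]) auto
qed

end

context fg begin

definition Cyc :: "nat set" where "Cyc = {x. x < n \<and> periodic x}"

lemma Cyc_orbit:
  assumes "conn" "c < n" "periodic c"
  shows "Cyc = (\<lambda>j. (f^^j) c) ` {..<per c}"
proof
  show "Cyc \<subseteq> (\<lambda>j. (f^^j) c) ` {..<per c}"
  proof
    fix y assume "y \<in> Cyc"
    then obtain j where "j < per c" "y = (f^^j) c"
      using cyc_conn_lt[OF assms(1,2,3)] unfolding Cyc_def by blast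
    then show "y \<in> (\<lambda>j. (f^^j) c) ` {..<per c}" by blast
  qed
  show "(\<lambda>j. (f^^j) c) ` {..<per c} \<subseteq> Cyc"
    unfolding Cyc_def using iter_lt[OF assms(2)] periodic_iter[OF assms(3)] by blast
qed

lemma card_Cyc:
  assumes "conn" "c < n" "periodic c"
  shows "card Cyc = per c"
proof -
  have "inj_on (\<lambda>j. (f^^j) c) {..<per c}"
    unfolding inj_on_def using iter_inj[OF assms(3)] by blast
  then show ?thesis unfolding Cyc_orbit[OF assms] by (simp add: card_image)
qed

lemma arcs_eq:
  assumes "\<And>i. i < n \<Longrightarrow> S i = {f i}"
  shows "arcs n S = {(i, f i) | i. i < n}"
  using assms unfolding arcs_def by auto

lemma arc_iff:
  assumes "\<And>i. i < n \<Longrightarrow> S i = {f i}"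
  shows "(a,b) \<in> arcs n S \<longleftrightarrow> a < n \<and> b = f a"
  using assms unfolding arcs_def by auto

lemma cycle_exists:
  assumes S: "\<And>i. i < n \<Longrightarrow> S i = {f i}"
    and "conn" "c < n" "periodic c"
  shows "is_cycleU n S Cyc ((\<lambda>v. (v, f v)) ` Cyc)"
proof -
  let ?L = "per c"
  define vs where "vs = map (\<lambda>j. (f^^j) c) [0..<?L]"
  define es where "es = map (\<lambda>j. ((f^^j) c, (f^^Suc j) c)) [0..<?L]"
  have L2: "2 \<le> ?L" using per_ge2 assms by blast
  have inj: "inj_on (\<lambda>j. (f^^j) c) {0..<?L}"
    unfolding inj_on_def using iter_inj[OF assms(4)] by auto
  have d1: "distinct vs" unfolding vs_def using inj by (simp add: distinct_map)
  have inj2: "inj_on (\<lambda>j. ((f^^j) c, (f^^Suc j) c)) {0..<?L}"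
    using inj unfolding inj_on_def by auto
  have d2: "distinct es" unfolding es_def using inj2 by (simp add: distinct_map)
  have s1: "set vs \<subseteq> {0..<n}" unfolding vs_def using iter_lt[OF assms(3)] by auto
  have s2: "set es \<subseteq> arcs n S" unfolding es_def
    using iter_lt[OF assms(3)] by (auto simp: arc_iff[OF S])
  have s3: "set vs = Cyc" unfolding vs_def Cyc_orbit[OF assms(2,3,4)] by auto
  have s4: "set es = (\<lambda>v. (v, f v)) ` Cyc" unfolding es_def Cyc_orbit[OF assms(2,3,4)]
    by auto
  have j: "joins (es ! j) (vs ! j) (vs ! (Suc j mod length vs))" if "j < length vs" for j
  proof -
    have jl: "j < ?L" using that unfolding vs_def by simp
    have "vs ! (Suc j mod length vs) = (f^^(Suc j mod ?L)) c"
      unfolding vs_def using L2 by simp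
    also have "\<dots> = (f^^Suc j) c" using funpow_mod[OF assms(4)] by simp
    finally show ?thesis unfolding joins_def es_def vs_def using jl by simp
  qed
  show ?thesis unfolding is_cycleU_def
    apply (rule exI[of _ vs], rule exI[of _ es])
    using L2 d1 d2 s1 s2 s3 s4 j by (simp add: vs_def es_def)
qed

lemma inj_funpow_on:
  assumes "inj_on f V" "f ` V \<subseteq> V"
  shows "inj_on (f^^k) V"
proof (induction k)
  case 0 then show ?case by simp
next
  case (Suc k)
  have "(f^^k) ` V \<subseteq> V" using assms(2) by (induction k) auto
  then have "inj_on (f \<circ> (f^^k)) V" using Suc assms(1) by (meson comp_inj_on inj_on_subset)
  then show ?case by (simp add: o_def)
qed

lemma iter_in: "f ` V \<subseteq> V \<Longrightarrow> v \<in> V \<Longrightarrow> (f^^k) v \<in> V"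
  by (induction k) auto

lemma cycle_unique:
  assumes S: "\<And>i. i < n \<Longrightarrow> S i = {f i}"
    and cn: "conn" and cyc: "is_cycleU n S V E"
  shows "V = Cyc \<and> E = (\<lambda>v. (v, f v)) ` Cyc"
proof -
  obtain vs es where H: "length vs \<ge> 2" "length es = length vs" "distinct vs" "distinct es"
    "set vs \<subseteq> {0..<n}" "set es \<subseteq> arcs n S" "set vs = V" "set es = E"
    "\<And>j. j < length vs \<Longrightarrow> joins (es ! j) (vs ! j) (vs ! (Suc j mod length vs))"
    using cyc unfolding is_cycleU_def by blast
  let ?L = "length vs"
  have Lpos: "0 < ?L" using H(1) by linarith
  have arc: "fst e < n \<and> e = (fst e, f (fst e))" if "e \<in> E" for e
  proof -
    obtain a b where "e = (a,b)" by fastforce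
    then show ?thesis using that H(6,8) arc_iff[OF S, of a b] by auto
  qed
  have ends: "fst e \<in> V \<and> snd e \<in> V" if "e \<in> E" for e
  proof -
    from that H(8) obtain j where j: "j < ?L" "e = es ! j" using H(2) by (metis in_set_conv_nth)
    have "Suc j mod ?L < ?L" using H(1) by (intro mod_less_divisor) linarith
    then have "vs ! j \<in> V" "vs ! (Suc j mod ?L) \<in> V" using j H(7) by auto
    then show ?thesis using H(9)[OF j(1)] j(2) unfolding joins_def by auto
  qed
  have finV: "finite V" "finite E" using H(7,8) by auto
  have cardE: "card E = card V" using H(2,3,4,7,8) distinct_card by metis
  have injfst: "inj_on fst E" using arc unfolding inj_on_def by (metis prod.collapse)
  have "fst ` E \<subseteq> V" using ends by auto
  moreover have "card (fst ` E) = card V" using card_image[OF injfst] cardE by simp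
  ultimately have fstE: "fst ` E = V" using card_subset_eq[OF finV(1)] by blast
  have out: "(v, f v) \<in> E \<and> f v \<in> V" if "v \<in> V" for v
  proof -
    from that fstE obtain e where "e \<in> E" "fst e = v" by auto
    then show ?thesis using arc ends by (metis snd_conv)
  qed
  have Eeq: "E = (\<lambda>v. (v, f v)) ` V"
  proof
    show "E \<subseteq> (\<lambda>v. (v, f v)) ` V"
    proof
      fix e assume "e \<in> E" then show "e \<in> (\<lambda>v. (v, f v)) ` V"
        using arc ends by (metis image_eqI)
    qed
    show "(\<lambda>v. (v, f v)) ` V \<subseteq> E" using out by auto
  qed
  have inn: "\<exists>x\<in>V. f x = v" if "v \<in> V" for v
  proof -
    from that H(7) obtain j where j: "j < ?L" "v = vs ! j" by (metis in_set_conv_nth)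
    define j' where "j' = (j + ?L - 1) mod ?L"
    have j'l: "j' < ?L" unfolding j'_def by (rule mod_less_divisor[OF Lpos])
    have sj': "Suc j' mod ?L = j"
    proof -
      have "Suc j' mod ?L = (Suc ((j + ?L - 1) mod ?L)) mod ?L" unfolding j'_def by simp
      also have "\<dots> = (Suc (j + ?L - 1)) mod ?L" by (simp add: mod_Suc_eq)
      also have "Suc (j + ?L - 1) = j + ?L" using H(1) by simp
      finally show ?thesis using j(1) by simp
    qed
    have jj: "j \<noteq> j'"
    proof
      assume "j = j'"
      then have m: "Suc j mod ?L = j" using sj' by simp
      show False
      proof (cases "Suc j < ?L")
        case True then show False using m by simp
      next
        case False then have "Suc j = ?L" using j(1) by simp
        then show False using m H(1) by simp
      qed
    qed
    have ne: "es ! j \<noteq> es ! j'" using nth_eq_iff_index_eq[OF H(4)] H(2) j(1) j'l jj by simp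
    have e1: "es ! j \<in> E" "es ! j' \<in> E" using H(2,8) j(1) j'l by auto
    have J1: "joins (es ! j) v (vs ! (Suc j mod ?L))" using H(9)[OF j(1)] j(2) by simp
    have J2: "joins (es ! j') (vs ! j') v" using H(9)[OF j'l] j(2) sj' by simp
    have vj': "vs ! j' \<in> V" "vs ! (Suc j mod ?L) \<in> V" using H(7) j'l mod_less_divisor[OF Lpos] by auto
    show ?thesis
    proof (cases "fst (es ! j') = v")
      case False
      then have "es ! j' = (vs ! j', v)" using J2 unfolding joins_def by auto
      then have "f (vs ! j') = v" using arc[OF e1(2)] by simp
      then show ?thesis using vj' by blast
    next
      case True
      then have a2: "es ! j' = (v, f v)" using arc[OF e1(2)] by (metis)
      show ?thesis
      proof (cases "fst (es ! j) = v")
        case True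
        then have "es ! j = (v, f v)" using arc[OF e1(1)] by metis
        then show ?thesis using a2 ne by simp
      next
        case False
        then have "es ! j = (vs ! (Suc j mod ?L), v)" using J1 unfolding joins_def by auto
        then have "f (vs ! (Suc j mod ?L)) = v" using arc[OF e1(1)] by simp
        then show ?thesis using vj' by blast
      qed
    qed
  qed
  have fV: "f ` V = V" using out inn by blast
  have injV: "inj_on f V" using finite_surj_inj[OF finV(1)] fV by simp
  have Vn: "V \<subseteq> {0..<n}" using H(5,7) by simp
  have perV: "periodic v" if "v \<in> V" for v
  proof -
    have vn: "v < n" using that Vn by auto
    obtain k where k: "periodic ((f^^k) v)" using ex_periodic[OF vn] by blast
    let ?p = "per ((f^^k) v)"
    have "(f^^?p) ((f^^k) v) = (f^^k) v" using per_props(2)[OF k] .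
    then have "(f^^k) ((f^^?p) v) = (f^^k) v" by (metis comp_apply funpow_add add.commute)
    moreover have "(f^^?p) v \<in> V" using fV that iter_in by simp
    ultimately have "(f^^?p) v = v"
      using inj_funpow_on[OF injV, of k] fV that unfolding inj_on_def by blast
    then show ?thesis unfolding periodic_def using per_props(1)[OF k] by blast
  qed
  have VC: "V = Cyc"
  proof
    show "V \<subseteq> Cyc" using perV Vn unfolding Cyc_def by auto
    show "Cyc \<subseteq> V"
    proof
      fix y assume y: "y \<in> Cyc"
      obtain v where v: "v \<in> V" using H(1,7) by (metis length_0_conv list.set_intros(1) neq_Nil_conv not_numeral_le_zero)
      have "v < n" using v Vn by auto
      then obtain j where "y = (f^^j) v"
        using cyc_conn[OF cn, of v y] y unfolding Cyc_def by auto
      moreover have "(f^^j) v \<in> V" using v fV iter_in by simp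
      ultimately show "y \<in> V" by simp
    qed
  qed
  show ?thesis using VC Eeq by simp
qed

end

lemma Adj_relpow_sym: "(a,b) \<in> Adj n h ^^ k \<Longrightarrow> (b,a) \<in> Adj n h ^^ k"
  by (rule relpow_sym) (auto simp: Adj_def)

context fg begin

definition idx :: "nat \<Rightarrow> nat \<Rightarrow> nat" where
  "idx c y = (LEAST j. (f^^j) c = y)"

definition cycd :: "nat \<Rightarrow> nat \<Rightarrow> nat" where
  "cycd c y = min (idx c y) (per c - idx c y)"

lemma idx_iter:
  assumes "periodic c" "j < per c"
  shows "idx c ((f^^j) c) = j"
proof -
  have 1: "(f^^(idx c ((f^^j) c))) c = (f^^j) c" unfolding idx_def by (rule LeastI) (rule refl)
  have "idx c ((f^^j) c) \<le> j" unfolding idx_def by (rule Least_le) (rule refl)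
  then show ?thesis using iter_inj[OF assms(1) _ assms(2) 1] assms(2) by linarith
qed

lemma idx_props:
  assumes "conn" "c < n" "periodic c" "y < n" "periodic y"
  shows "idx c y < per c" "(f^^(idx c y)) c = y"
proof -
  obtain j where j: "j < per c" "y = (f^^j) c" using cyc_conn_lt[OF assms] by blast
  show "idx c y < per c" using idx_iter[OF assms(3) j(1)] j by simp
  show "(f^^(idx c y)) c = y" using idx_iter[OF assms(3) j(1)] j by simp
qed

lemma idx_f:
  assumes "conn" "c < n" "periodic c" "y < n" "periodic y"
  shows "idx c (f y) = Suc (idx c y) mod per c"
proof -
  have "f y = (f^^Suc (idx c y)) c" using idx_props(2)[OF assms] by simp
  also have "\<dots> = (f^^(Suc (idx c y) mod per c)) c" using funpow_mod[OF assms(3)] by blast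
  finally show ?thesis using idx_iter[OF assms(3)] per_props(1)[OF assms(3)] by simp
qed

lemma cycd_lip:
  assumes "conn" "c < n" "periodic c" "y < n" "periodic y"
  shows "\<bar>int (cycd c (f y)) - int (cycd c y)\<bar> \<le> 1"
proof -
  let ?i = "idx c y" and ?L = "per c"
  have i: "?i < ?L" using idx_props[OF assms] by simp
  have L2: "2 \<le> ?L" using per_ge2 assms(2,3) by blast
  show ?thesis
  proof (cases "Suc ?i < ?L")
    case True
    then have "idx c (f y) = Suc ?i" using idx_f[OF assms] by simp
    then show ?thesis unfolding cycd_def using True by simp
  next
    case False
    then have "Suc ?i = ?L" using i by simp
    then have "idx c (f y) = 0" using idx_f[OF assms] by simp
    then show ?thesis unfolding cycd_def using \<open>Suc ?i = ?L\<close> L2 by simp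
  qed
qed

definition phiP :: "nat \<Rightarrow> nat \<Rightarrow> int" where
  "phiP c x = int (cycd c (root x)) + int (depth x)"
definition phiM :: "nat \<Rightarrow> nat \<Rightarrow> int" where
  "phiM c x = int (cycd c (root x)) - int (depth x)"

lemma phi_f:
  assumes "conn" "c < n" "periodic c" "x < n"
  shows "\<bar>phiP c (f x) - phiP c x\<bar> \<le> 1 \<and> \<bar>phiM c (f x) - phiM c x\<bar> \<le> 1"
proof (cases "periodic x")
  case True
  have "periodic (f x)" using periodic_f[OF True] .
  then have "root (f x) = f x" "depth (f x) = 0" "root x = x" "depth x = 0"
    using root_per depth_per True by auto
  then show ?thesis unfolding phiP_def phiM_def using cycd_lip[OF assms True] by simp
next
  case False
  then show ?thesis unfolding phiP_def phiM_def using depth_f[OF assms(4) False] by simp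
qed

lemma phi_adj:
  assumes "conn" "c < n" "periodic c" "(a,b) \<in> Adj n f"
  shows "phiP c b \<le> phiP c a + 1 \<and> phiM c b \<le> phiM c a + 1"
proof -
  from assms(4) have ab: "a < n" "b < n" "b = f a \<or> a = f b" unfolding Adj_def by auto
  from ab(3) show ?thesis
  proof
    assume "b = f a" then show ?thesis using phi_f[OF assms(1,2,3) ab(1)] by auto
  next
    assume "a = f b" then show ?thesis using phi_f[OF assms(1,2,3) ab(2)] by auto
  qed
qed

lemma walk_fwd:
  assumes "x < n" "\<And>i. i < k \<Longrightarrow> h ((f^^i) x) = f ((f^^i) x)"
  shows "(x, (f^^k) x) \<in> (Adj n h)^^k"
  using assms(2)
proof (induction k)
  case 0 then show ?case by simp
next
  case (Suc k)
  have 1: "(x, (f^^k) x) \<in> (Adj n h)^^k" using Suc by simp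
  have "h ((f^^k) x) = f ((f^^k) x)" using Suc.prems by simp
  then have "((f^^k) x, (f^^Suc k) x) \<in> Adj n h"
    using iter_lt[OF assms(1), of k] iter_lt[OF assms(1), of "Suc k"] unfolding Adj_def by simp
  then show ?case by (rule relpow_Suc_I[OF 1])
qed

lemma walk_bwd:
  assumes "x < n" "\<And>i. i < k \<Longrightarrow> h ((f^^i) x) = f ((f^^i) x)"
  shows "((f^^k) x, x) \<in> (Adj n h)^^k"
  using Adj_relpow_sym[OF walk_fwd[OF assms]] .

lemma conn_from:
  assumes "\<And>x. x < n \<Longrightarrow> \<exists>k. (u, x) \<in> (Adj n h)^^k"
  shows "\<forall>a<n. \<forall>b<n. (a,b) \<in> (Adj n h)\<^sup>*"
proof (intro allI impI)
  fix a b assume "a < n" "b < n"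
  obtain k where "(u,a) \<in> (Adj n h)^^k" using assms \<open>a<n\<close> by blast
  then have "(a,u) \<in> (Adj n h)^^k" by (rule Adj_relpow_sym)
  moreover obtain m where "(u,b) \<in> (Adj n h)^^m" using assms \<open>b<n\<close> by blast
  ultimately show "(a,b) \<in> (Adj n h)\<^sup>*" by (meson relpow_imp_rtrancl rtrancl_trans)
qed

end

lemma ncomp_conn:
  fixes n :: nat
  assumes "\<forall>a<n. \<forall>b<n. (a,b) \<in> R\<^sup>*" "0 < n"
  shows "card ({0..<n} // (R\<^sup>* \<inter> ({0..<n} \<times> {0..<n}))) = 1"
proof -
  have "R\<^sup>* \<inter> ({0..<n} \<times> {0..<n}) = {0..<n} \<times> {0..<n}" using assms(1) by auto
  moreover have "{0..<n} // ({0..<n} \<times> {0..<n}) = {{0..<n}}"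
    using assms(2) unfolding quotient_def by auto
  ultimately show ?thesis by simp
qed

definition ecc :: "nat \<Rightarrow> (nat \<Rightarrow> nat) \<Rightarrow> nat \<Rightarrow> nat" where
  "ecc n h u = Max ((\<lambda>v. gd (Adj n h) (n^2) u v) ` {0..<n})"

lemma ecc_ge: "x < n \<Longrightarrow> gd (Adj n h) (n^2) u x \<le> ecc n h u"
  unfolding ecc_def by (rule Max_ge) auto

lemma ecc_le: "0 < n \<Longrightarrow> (\<And>x. x < n \<Longrightarrow> gd (Adj n h) (n^2) u x \<le> B) \<Longrightarrow> ecc n h u \<le> B"
  unfolding ecc_def by (subst Max_le_iff) auto

context fg begin

lemma cyc_ne: "periodic c \<Longrightarrow> 0 < a \<Longrightarrow> a < per c \<Longrightarrow> (f^^a) c \<noteq> c"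
  using per_min by blast

lemma iter_add: "(f^^a) ((f^^b) x) = (f^^(a+b)) x"
  by (simp add: funpow_add)

lemma D4:
  assumes cn: "conn" and x0: "x0 < n" and Dmax: "\<And>x. x < n \<Longrightarrow> depth x \<le> depth x0"
    and L8: "8 \<le> per (root x0)"
  shows "\<exists>c<n. \<exists>t<n. t \<noteq> c \<and> ecc n (f(c := t)) c < ecc n f c \<and>
           (\<forall>a<n. \<forall>b<n. (a,b) \<in> (Adj n (f(c := t)))\<^sup>*)"
proof -
  define r0 where "r0 = root x0"
  define D where "D = depth x0"
  define L where "L = per r0"
  define m where "m = L div 2"
  have r0: "r0 < n" "periodic r0" unfolding r0_def using root_lt root_periodic x0 by auto
  have L8': "8 \<le> L" using L8 unfolding L_def r0_def .
  have m4: "4 \<le> m" "m < L" "L \<le> 2*m+1" "m \<le> L - m" using L8' unfolding m_def by auto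
  define c where "c = (f^^(L - m)) r0"
  have c: "c < n" "periodic c" unfolding c_def using iter_lt r0 periodic_iter by auto
  have Lc: "per c = L" using card_Cyc[OF cn c] card_Cyc[OF cn r0] unfolding L_def by simp
  have mc: "(f^^m) c = r0" unfolding c_def iter_add using m4 per_props(2)[OF r0(2)]
    unfolding L_def by simp
  have idxr0: "idx c r0 = m" using idx_iter[OF c(2), of m] m4 Lc mc by simp
  have idxc: "idx c c = 0" using idx_iter[OF c(2), of 0] Lc m4 by simp
  define t where "t = (f^^3) c"
  have t: "t < n" "t \<noteq> c" unfolding t_def using iter_lt[OF c(1)] cyc_ne[OF c(2), of 3] Lc L8' by auto
  define g where "g = f(c := t)"
  have cne: "(f^^a) c \<noteq> c" if "0 < a" "a < L" for a using cyc_ne[OF c(2)] that Lc by simp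
  have gf: "g ((f^^a) c) = f ((f^^a) c)" if "0 < a" "a < L" for a
    unfolding g_def using cne[OF that] by simp
  have old: "m + D \<le> ecc n f c"
  proof -
    have "(c, x0) \<in> (Adj n f)\<^sup>*" using cn c x0 unfolding conn_def by blast
    then obtain k where k: "(c, x0) \<in> (Adj n f)^^k" by (auto simp: rtrancl_power)
    have "phiP c x0 - phiP c c \<le> int (gd (Adj n f) (n^2) c x0)"
      by (rule gd_lower[OF _ k]) (use phi_adj[OF cn c] in blast)
    moreover have "phiP c x0 = int m + int D" unfolding phiP_def cycd_def
      using idxr0 Lc m4 unfolding r0_def D_def by simp
    moreover have "phiP c c = 0" unfolding phiP_def cycd_def
      using idxc root_per[OF c(2)] depth_per[OF c(2)] by simp
    ultimately have "m + D \<le> gd (Adj n f) (n^2) c x0" by linarith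
    then show ?thesis using ecc_ge[OF x0] by (meson le_trans)
  qed
  have ct: "(c, t) \<in> (Adj n g)^^1" using c t unfolding g_def Adj_def by simp
  have tocyc: "\<exists>w \<le> m - 1. (c, y) \<in> (Adj n g)^^w" if y: "y < n" "periodic y" for y
  proof -
    define j where "j = idx c y"
    have j: "j < L" "(f^^j) c = y" using idx_props[OF cn c y] Lc unfolding j_def by auto
    consider "j = 0" | "j = 1" | "j = 2" | "3 \<le> j" "j \<le> m + 1" | "m + 2 \<le> j" by linarith
    then show ?thesis
    proof cases
      case 1 then show ?thesis using j by (intro exI[of _ 0]) auto
    next
      case 2
      have "((f^^2) (f c), f c) \<in> (Adj n g)^^2"
      proof (rule walk_bwd)
        show "f c < n" using f_lt c by simp
        fix i assume "i < (2::nat)"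
        then show "g ((f^^i) (f c)) = f ((f^^i) (f c))" using gf[of "Suc i"] L8'
          by (simp add: iter_Suc'[symmetric])
      qed
      moreover have "(f^^2) (f c) = t" unfolding t_def by (simp add: iter_Suc' numeral_eq_Suc)
      ultimately have "(c, f c) \<in> (Adj n g)^^(1+2)" using relpow_trans ct by metis
      moreover have "f c = y" using j 2 by simp
      ultimately have P: "(c, y) \<in> (Adj n g)^^(1+2)" by simp
      have "1 + 2 \<le> m - 1" using m4 by simp
      then show ?thesis using P by blast
    next
      case 3
      have "((f^^1) ((f^^2) c), (f^^2) c) \<in> (Adj n g)^^1"
      proof (rule walk_bwd)
        show "(f^^2) c < n" using iter_lt c by simp
        fix i assume "i < (1::nat)"
        then show "g ((f^^i) ((f^^2) c)) = f ((f^^i) ((f^^2) c))" using gf[of 2] L8' by simp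
      qed
      moreover have "(f^^1) ((f^^2) c) = t" unfolding t_def iter_add by (simp only: one_plus_numeral semiring_norm)
      ultimately have "(c, (f^^2) c) \<in> (Adj n g)^^(1+1)" using relpow_trans ct by metis
      then have P: "(c, y) \<in> (Adj n g)^^(1+1)" using j 3 by simp
      have "1 + 1 \<le> m - 1" using m4 by simp
      then show ?thesis using P by blast
    next
      case 4
      have "(t, (f^^(j-3)) t) \<in> (Adj n g)^^(j-3)"
      proof (rule walk_fwd)
        show "t < n" using t by simp
        fix i assume "i < j - 3"
        then show "g ((f^^i) t) = f ((f^^i) t)" unfolding t_def iter_add using gf[of "i+3"] j 4
          by simp
      qed
      moreover have "(f^^(j-3)) t = y" unfolding t_def iter_add using 4 j by simp
      ultimately have "(c, y) \<in> (Adj n g)^^(1 + (j-3))" using relpow_trans ct by metis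
      then show ?thesis using 4 by (intro exI[of _ "1 + (j-3)"]) auto
    next
      case 5
      have "((f^^(L-j)) y, y) \<in> (Adj n g)^^(L-j)"
      proof (rule walk_bwd)
        show "y < n" using y by simp
        fix i assume "i < L - j"
        then show "g ((f^^i) y) = f ((f^^i) y)" using j(2)[symmetric] gf[of "i+j"] 5 m4 by (simp add: iter_add)
      qed
      moreover have "(f^^(L-j)) y = c" using j(2)[symmetric] j(1) per_props(2)[OF c(2)] Lc
        by (simp add: iter_add)
      ultimately show ?thesis using 5 m4 by (intro exI[of _ "L-j"]) auto
    qed
  qed
  have tox: "\<exists>k \<le> m - 1 + D. (c, x) \<in> (Adj n g)^^k" if x: "x < n" for x
  proof -
    have rx: "root x < n" "periodic (root x)" using root_lt root_periodic x by auto
    obtain w where w: "w \<le> m - 1" "(c, root x) \<in> (Adj n g)^^w" using tocyc[OF rx] by blast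
    have "((f^^(depth x)) x, x) \<in> (Adj n g)^^(depth x)"
    proof (rule walk_bwd[OF x])
      fix i assume "i < depth x"
      then have "\<not> periodic ((f^^i) x)" by (rule nonper_below_depth)
      then have "(f^^i) x \<noteq> c" using c(2) by auto
      then show "g ((f^^i) x) = f ((f^^i) x)" unfolding g_def by simp
    qed
    then have "(root x, x) \<in> (Adj n g)^^(depth x)" unfolding root_def .
    then have "(c, x) \<in> (Adj n g)^^(w + depth x)" using w(2) relpow_trans by metis
    moreover have "w + depth x \<le> m - 1 + D" using w(1) Dmax[OF x] unfolding D_def by simp
    ultimately show ?thesis by blast
  qed
  have new: "ecc n g c \<le> m - 1 + D"
  proof (rule ecc_le)
    show "0 < n" using c by simp
    fix x assume "x < n"
    then obtain k where "k \<le> m - 1 + D" "(c, x) \<in> (Adj n g)^^k" using tox by blast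
    then show "gd (Adj n g) (n^2) c x \<le> m - 1 + D" using gd_le by (meson le_trans)
  qed
  have cong: "\<forall>a<n. \<forall>b<n. (a,b) \<in> (Adj n g)\<^sup>*"
    by (rule conn_from) (use tox in blast)
  show ?thesis using c(1) t new old cong m4 unfolding g_def
    by (intro exI[of _ c] conjI exI[of _ t]) auto
qed

end

context fg begin

lemma D2:
  assumes cn: "conn" and v: "v < n" and Dmax: "\<And>x. x < n \<Longrightarrow> depth x \<le> depth v"
    and D3: "3 \<le> depth v"
  shows "\<exists>t<n. t \<noteq> v \<and> ecc n (f(v := t)) v < ecc n f v \<and>
           (\<forall>a<n. \<forall>b<n. (a,b) \<in> (Adj n (f(v := t)))\<^sup>*)"
proof -
  define D where "D = depth v"
  define w where "w = f v"
  define p where "p = f w"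
  have npv: "\<not> periodic v" using D3 depth_per by fastforce
  have w: "w < n" unfolding w_def using f_lt v by simp
  have dw: "depth w = D - 1" using depth_f[OF v npv] unfolding w_def D_def by simp
  have npw: "\<not> periodic w" using dw D3 depth_per unfolding D_def by fastforce
  have p: "p < n" unfolding p_def using f_lt w by simp
  have dp: "depth p = D - 2" using depth_f[OF w npw] dw unfolding p_def by simp
  have pv: "p \<noteq> v" using dp D3 unfolding D_def by auto
  have wv: "w \<noteq> v" using dw D3 unfolding D_def by auto
  have leaf: "f z \<noteq> y" if "y < n" "depth y = D" "z < n" for y z
  proof
    assume fz: "f z = y"
    have npy: "\<not> periodic y" using that(2) D3 depth_per unfolding D_def by fastforce
    then have "\<not> periodic z" using periodic_f fz by blast
    then have "depth z = Suc D" using depth_f[OF that(3)] fz that(2) by simp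
    then show False using Dmax[OF that(3)] unfolding D_def by simp
  qed
  have child: "depth y = D" if "y < n" "f y = w" for y
  proof -
    have "\<not> periodic y" using npw periodic_f that(2) by blast
    then show ?thesis using depth_f[OF that(1)] that(2) dw D3 unfolding D_def by simp
  qed
  define g where "g = f(v := p)"
  have Agf: "(a,b) \<in> Adj n g \<longleftrightarrow> (a,b) \<in> Adj n f" if "a \<noteq> v" "b \<noteq> v" for a b
    using that unfolding g_def Adj_def by auto
  have vp: "(v,p) \<in> Adj n g" using v p unfolding g_def Adj_def by simp
  have pw: "(p,w) \<in> Adj n g" using p w wv unfolding g_def Adj_def p_def by simp
  have wy: "(w,y) \<in> Adj n g" if "y < n" "f y = w" "y \<noteq> v" for y
    using that w unfolding g_def Adj_def by simp
  define r where "r = root v"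
  have r: "r < n" "periodic r" unfolding r_def using root_lt root_periodic v by auto
  have old: "D + 1 \<le> ecc n f v"
  proof -
    have fr: "f r < n" "periodic (f r)" using f_lt r periodic_f by auto
    have "(v, f r) \<in> (Adj n f)\<^sup>*" using cn v fr unfolding conn_def by blast
    then obtain k where k: "(v, f r) \<in> (Adj n f)^^k" by (auto simp: rtrancl_power)
    have "phiM r (f r) - phiM r v \<le> int (gd (Adj n f) (n^2) v (f r))"
      by (rule gd_lower[OF _ k]) (use phi_adj[OF cn r] in blast)
    moreover have "idx r (f r) = 1" using idx_f[OF cn r r] idx_iter[OF r(2), of 0]
        per_ge2[OF r] by simp
    then have "phiM r (f r) = 1" unfolding phiM_def cycd_def
      using root_per[OF fr(2)] depth_per[OF fr(2)] per_ge2[OF r] by simp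
    moreover have "idx r r = 0" using idx_iter[OF r(2), of 0] per_props(1)[OF r(2)] by simp
    then have "phiM r v = - int D" unfolding phiM_def cycd_def r_def D_def by simp
    ultimately have "D + 1 \<le> gd (Adj n f) (n^2) v (f r)" by linarith
    then show ?thesis using ecc_ge[OF fr(1)] by (meson le_trans)
  qed
  have main: "\<exists>j. j + 1 \<le> k \<and> (v,x) \<in> (Adj n g)^^j"
    if "gd (Adj n f) (n^2) v x = k" "x < n" "x \<noteq> v" "x \<noteq> w" "f x \<noteq> w" for k x
    using that
  proof (induction k arbitrary: x rule: less_induct)
    case (less k)
    have "(v,x) \<in> (Adj n f)\<^sup>*" using cn v less.prems(2) unfolding conn_def by blast
    then obtain kk where kk: "(v,x) \<in> (Adj n f)^^kk" by (auto simp: rtrancl_power)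
    have "k \<noteq> 0" using gd_zero[OF kk] less.prems(1,3) by auto
    then obtain k' where k': "k = Suc k'" by (cases k) auto
    obtain y where y: "gd (Adj n f) (n^2) v y = k'" "(y,x) \<in> Adj n f" "(v,y) \<in> (Adj n f)^^k'"
      using gd_pred[OF kk] less.prems(1) k' by blast
    have yn: "y < n" using y(2) unfolding Adj_def by simp
    consider "y = v" | "y = w" | "y \<noteq> v" "y \<noteq> w" "f y = w" | "y \<noteq> v" "y \<noteq> w" "f y \<noteq> w" by blast
    then show ?case
    proof cases
      case 1
      then have "x = w \<or> v = f x" using y(2) unfolding Adj_def w_def by auto
      then show ?thesis using less.prems leaf[OF v _ less.prems(2)] unfolding D_def by auto
    next
      case 2
      then have "x = p \<or> w = f x" using y(2) unfolding Adj_def p_def by auto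
      then have xp: "x = p" using less.prems(5) by simp
      have "k' \<noteq> 0" using gd_zero[OF y(3)] y(1) 2 wv by auto
      then show ?thesis using xp vp k' by (intro exI[of _ 1]) auto
    next
      case 3
      then have "x = w \<or> y = f x" using y(2) unfolding Adj_def by auto
      then show ?thesis using less.prems leaf[OF yn child[OF yn 3(3)] less.prems(2)] by auto
    next
      case 4
      have "k' < k" using k' by simp
      from less.IH[OF this y(1) yn 4] obtain j where j: "j + 1 \<le> k'" "(v,y) \<in> (Adj n g)^^j"
        by blast
      have "(y,x) \<in> Adj n g" using Agf[of y x] 4 y(2) less.prems(3) by simp
      then have "(v,x) \<in> (Adj n g)^^(Suc j)" using j(2) by (rule relpow_Suc_I[rotated])
      then show ?thesis using j(1) k' by (intro exI[of _ "Suc j"]) auto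
    qed
  qed
  have bound: "\<exists>j. j \<le> max 3 (gd (Adj n f) (n^2) v x - 1) \<and> (v,x) \<in> (Adj n g)^^j"
    if x: "x < n" for x
  proof -
    consider "x = v" | "x = w" | "x \<noteq> v" "x \<noteq> w" "f x = w" | "x \<noteq> v" "x \<noteq> w" "f x \<noteq> w"
      by blast
    then show ?thesis
    proof cases
      case 1 then show ?thesis by (intro exI[of _ 0]) auto
    next
      case 2
      have "(v,w) \<in> (Adj n g)^^(Suc (Suc 0))" using vp pw by auto
      then show ?thesis using 2 by (intro exI[of _ 2]) (auto simp: numeral_2_eq_2)
    next
      case 3
      have "(v,x) \<in> (Adj n g)^^(Suc (Suc (Suc 0)))" using vp pw wy[OF x 3(3) 3(1)] by auto
      then show ?thesis by (intro exI[of _ 3]) (auto simp: numeral_3_eq_3)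
    next
      case 4
      from main[OF refl x 4] obtain j where "j + 1 \<le> gd (Adj n f) (n^2) v x" "(v,x) \<in> (Adj n g)^^j"
        by blast
      then show ?thesis by (intro exI[of _ j]) auto
    qed
  qed
  have new: "ecc n g v \<le> ecc n f v - 1"
  proof (rule ecc_le)
    show "0 < n" using v by simp
    fix x assume x: "x < n"
    obtain j where j: "j \<le> max 3 (gd (Adj n f) (n^2) v x - 1)" "(v,x) \<in> (Adj n g)^^j"
      using bound[OF x] by blast
    have "gd (Adj n f) (n^2) v x \<le> ecc n f v" by (rule ecc_ge[OF x])
    then have "max 3 (gd (Adj n f) (n^2) v x - 1) \<le> ecc n f v - 1" using old D3
      unfolding D_def by auto
    then show "gd (Adj n g) (n^2) v x \<le> ecc n f v - 1" using gd_le[OF j(2), of "n^2"] j(1) by linarith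
  qed
  have cong: "\<forall>a<n. \<forall>b<n. (a,b) \<in> (Adj n g)\<^sup>*"
    by (rule conn_from) (use bound in blast)
  show ?thesis using p pv new old cong D3 unfolding g_def D_def
    by (intro exI[of _ p] conjI) auto
qed

end

definition ncomp :: "nat \<Rightarrow> (nat \<Rightarrow> nat) \<Rightarrow> nat" where
  "ncomp n h = card ({0..<n} // ((Adj n h)\<^sup>* \<inter> ({0..<n} \<times> {0..<n})))"

definition costh :: "nat \<Rightarrow> (nat \<Rightarrow> nat) \<Rightarrow> nat \<Rightarrow> nat" where
  "costh n h u = ecc n h u + (ncomp n h - 1) * n^2"

lemma cost_eq:
  assumes "\<And>i. i < n \<Longrightarrow> S i = {h i}"
  shows "cost_max n S u = costh n h u"
proof -
  have e: "adjU n S = Adj n h" by (rule adjU_Adj) (rule assms)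
  show ?thesis unfolding cost_max_def costh_def num_components_def ncomp_def ecc_def distU_gd e ..
qed

lemma equiv_R: "equiv {0..<n} ((Adj n h)\<^sup>* \<inter> ({0..<n} \<times> {0..<n}))"
proof -
  have s: "sym ((Adj n h)\<^sup>*)" by (rule sym_rtrancl) (auto simp: sym_def Adj_def)
  show ?thesis unfolding equiv_def refl_on_def sym_def trans_def
    using s unfolding sym_def by (auto intro: rtrancl_trans)
qed

lemma ncomp_pos: "0 < n \<Longrightarrow> 0 < ncomp n h"
proof -
  assume n: "0 < n"
  let ?R = "(Adj n h)\<^sup>* \<inter> ({0..<n} \<times> {0..<n})"
  have fin: "finite ({0..<n} // ?R)" by (rule finite_quotient) auto
  have "?R``{0} \<in> {0..<n} // ?R" using n by (intro quotientI) simp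
  then have ne: "{0..<n} // ?R \<noteq> {}" by (intro notI) simp
  show ?thesis unfolding ncomp_def using fin ne by (simp only: card_gt_0_iff) simp
qed

context fg begin

lemma D1:
  assumes nc: "\<not> conn" and n: "0 < n"
  shows "\<exists>u<n. \<exists>t<n. t \<noteq> u \<and> costh n (f(u := t)) u < costh n f u"
proof -
  define u where "u = root 0"
  have u: "u < n" "periodic u" unfolding u_def using root_lt root_periodic n by auto
  obtain t where t: "t < n" "(u,t) \<notin> (Adj n f)\<^sup>*"
  proof -
    have "\<not> (\<forall>x<n. (u,x) \<in> (Adj n f)\<^sup>*)"
    proof
      assume "\<forall>x<n. (u,x) \<in> (Adj n f)\<^sup>*"
      then have "\<forall>x<n. \<exists>k. (u,x) \<in> (Adj n f)^^k" by (auto simp: rtrancl_power)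
      then have "\<forall>a<n. \<forall>b<n. (a,b) \<in> (Adj n f)\<^sup>*" using conn_from by blast
      then show False using nc unfolding conn_def by blast
    qed
    then show ?thesis using that by blast
  qed
  have tu: "t \<noteq> u" using t by auto
  define g where "g = f(u := t)"
  let ?A = "{0..<n}"
  define Rf where "Rf = (Adj n f)\<^sup>* \<inter> (?A \<times> ?A)"
  define Rg where "Rg = (Adj n g)\<^sup>* \<inter> (?A \<times> ?A)"
  have ufu: "(u, f u) \<in> (Adj n g)\<^sup>*"
  proof -
    have fu: "f u < n" using f_lt u by simp
    have "(f u, (f^^(per u - 1)) (f u)) \<in> (Adj n g)^^(per u - 1)"
    proof (rule walk_fwd[OF fu])
      fix i assume i: "i < per u - 1"
      have "(f^^i) (f u) = (f^^(Suc i)) u" by (rule iter_Suc'[symmetric])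
      moreover have "(f^^(Suc i)) u \<noteq> u" using per_min[of "Suc i" u] i by simp
      ultimately show "g ((f^^i) (f u)) = f ((f^^i) (f u))" unfolding g_def by simp
    qed
    moreover have "(f^^(per u - 1)) (f u) = u"
      using per_props[OF u(2)] by (metis Suc_diff_1 iter_Suc')
    ultimately have "(f u, u) \<in> (Adj n g)^^(per u - 1)" by simp
    then have "(u, f u) \<in> (Adj n g)^^(per u - 1)" by (rule Adj_relpow_sym)
    then show ?thesis by (rule relpow_imp_rtrancl)
  qed
  have sub: "Adj n f \<subseteq> (Adj n g)\<^sup>*"
  proof
    fix e assume e: "e \<in> Adj n f"
    obtain a b where ab: "e = (a,b)" by fastforce
    have a: "a < n" "b < n" "b = f a \<or> a = f b" using e ab unfolding Adj_def by auto
    have sg: "(y,x) \<in> (Adj n g)\<^sup>*" if "(x,y) \<in> (Adj n g)\<^sup>*" for x y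
      using that sym_rtrancl[of "Adj n g"] unfolding sym_def by (auto simp: Adj_def sym_def)
    have one: "(x, f x) \<in> (Adj n g)\<^sup>*" if "x < n" for x
    proof (cases "x = u")
      case True then show ?thesis using ufu by simp
    next
      case False
      then have "(x, f x) \<in> Adj n g" using that f_lt unfolding g_def Adj_def by simp
      then show ?thesis by simp
    qed
    from a(3) show "e \<in> (Adj n g)\<^sup>*"
    proof
      assume "b = f a" then show ?thesis using one[OF a(1)] ab by simp
    next
      assume "a = f b" then show ?thesis using sg[OF one[OF a(2)]] ab by simp
    qed
  qed
  have RfRg: "Rf \<subseteq> Rg" unfolding Rf_def Rg_def using rtrancl_subset_rtrancl[OF sub] by auto
  have ut: "(u,t) \<in> Rg" "(u,t) \<notin> Rf" using u t unfolding Rg_def Rf_def g_def Adj_def by auto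
  have eqf: "equiv ?A Rf" and eqg: "equiv ?A Rg" unfolding Rf_def Rg_def by (rule equiv_R)+
  define \<Phi> where "\<Phi> X = Rg `` X" for X
  have phi: "\<Phi> (Rf``{a}) = Rg``{a}" if "a \<in> ?A" for a
  proof
    show "\<Phi> (Rf``{a}) \<subseteq> Rg``{a}" unfolding \<Phi>_def
    proof
      fix z assume "z \<in> Rg `` (Rf `` {a})"
      then obtain b where b: "(a,b) \<in> Rf" "(b,z) \<in> Rg" by auto
      have "(a,b) \<in> Rg" using RfRg b(1) by auto
      then have "(a,z) \<in> Rg" using b(2) eqg unfolding equiv_def trans_def by blast
      then show "z \<in> Rg``{a}" by simp
    qed
    show "Rg``{a} \<subseteq> \<Phi> (Rf``{a})" unfolding \<Phi>_def using equiv_class_self[OF eqf that] by auto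
  qed
  have img: "\<Phi> ` (?A // Rf) = ?A // Rg"
  proof
    show "\<Phi> ` (?A // Rf) \<subseteq> ?A // Rg" using phi by (auto simp: quotient_def)
    show "?A // Rg \<subseteq> \<Phi> ` (?A // Rf)"
    proof
      fix X assume "X \<in> ?A // Rg"
      then obtain a where a: "a \<in> ?A" "X = Rg``{a}" by (auto elim: quotientE)
      then have "X = \<Phi> (Rf``{a})" using phi by simp
      moreover have "Rf``{a} \<in> ?A // Rf" using a by (intro quotientI)
      ultimately show "X \<in> \<Phi> ` (?A // Rf)" by blast
    qed
  qed
  have finf: "finite (?A // Rf)" unfolding Rf_def by (rule finite_quotient) auto
  have ninj: "\<not> inj_on \<Phi> (?A // Rf)"
  proof
    assume inj: "inj_on \<Phi> (?A // Rf)"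
    have "\<Phi> (Rf``{u}) = \<Phi> (Rf``{t})" using phi u t eq_equiv_class_iff[OF eqg] ut(1) by simp
    moreover have "Rf``{u} \<in> ?A // Rf" "Rf``{t} \<in> ?A // Rf" using u t by (auto intro: quotientI)
    ultimately have "Rf``{u} = Rf``{t}" using inj unfolding inj_on_def by blast
    then have "(u,t) \<in> Rf" using eq_equiv_class_iff[OF eqf] u t by simp
    then show False using ut by simp
  qed
  have c1: "card (\<Phi> ` (?A // Rf)) \<noteq> card (?A // Rf)"
    using inj_on_iff_eq_card[OF finf, of \<Phi>] ninj by blast
  have "card (\<Phi> ` (?A // Rf)) < card (?A // Rf)"
    using card_image_le[OF finf, of \<Phi>] c1 by linarith
  then have lt: "card (?A // Rg) < card (?A // Rf)" using img by simp
  have kg: "0 < ncomp n g" using ncomp_pos n by blast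
  have kk: "ncomp n g < ncomp n f" using lt unfolding ncomp_def Rf_def Rg_def .
  have oldecc: "n^2 \<le> ecc n f u"
  proof -
    have "\<not> (\<exists>k. (u,t) \<in> (Adj n f)^^k)" using t(2) by (auto simp: rtrancl_power)
    then have "gd (Adj n f) (n^2) u t = n^2" unfolding gd_def by simp
    then show ?thesis using ecc_ge[OF t(1), of f u] by simp
  qed
  have newecc: "ecc n g u \<le> n^2" by (rule ecc_le[OF n]) (rule gd_bound[OF Adj_sub])
  have "(ncomp n g - 1) * n^2 < (ncomp n f - 1) * n^2" using kg kk n by simp
  then have "costh n g u < costh n f u" unfolding costh_def using oldecc newecc by linarith
  then show ?thesis using u t tu unfolding g_def by blast
qed

end

theorem mainTheorem7:
  fixes n :: nat and S :: "nat \<Rightarrow> nat set"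
  assumes "n \<ge> 2"
    and "max_equilibrium n (\<lambda>_. 1) S"
  shows "connectedU n S \<and>
         (\<exists>!VE. is_cycleU n S (fst VE) (snd VE)) \<and>
         (\<forall>V E. is_cycleU n S V E \<longrightarrow>
            card V \<le> 7 \<and> (\<forall>v<n. \<exists>c\<in>V. distU n S v c \<le> 2))"
proof -
  have n0: "0 < n" using assms(1) by simp
  have vp: "valid_profile n (\<lambda>_. 1) S" using assms(2) unfolding max_equilibrium_def by simp
  define f where "f i = the_elem (S i)" for i
  have Sf: "S i = {f i} \<and> f i < n \<and> f i \<noteq> i" if "i < n" for i
  proof -
    from vp that have s: "S i \<subseteq> {0..<n} - {i}" "card (S i) = 1" unfolding valid_profile_def by auto
    from s(2) obtain a where a: "S i = {a}" by (rule card_1_singletonE)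
    then have "f i = a" unfolding f_def by simp
    then show ?thesis using a s(1) by auto
  qed
  interpret fg n f by unfold_locales (use Sf in auto)
  have Sf1: "\<And>i. i < n \<Longrightarrow> S i = {f i}" using Sf by blast
  have eq: "costh n f u \<le> costh n (f(u:=t)) u" if ut: "u < n" "t < n" "t \<noteq> u" for u t
  proof -
    have T: "{t} \<subseteq> {0..<n} - {u}" "card {t} = 1" using ut by auto
    have "cost_max n S u \<le> cost_max n (S(u := {t})) u"
      using assms(2) T ut(1) unfolding max_equilibrium_def by blast
    moreover have "cost_max n S u = costh n f u" by (rule cost_eq) (rule Sf1)
    moreover have "cost_max n (S(u:={t})) u = costh n (f(u:=t)) u"
      by (rule cost_eq) (auto simp: Sf1)
    ultimately show ?thesis by simp
  qed
  have cn: conn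
  proof (rule ccontr)
    assume "\<not> conn"
    from D1[OF this n0] obtain u t where "u < n" "t < n" "t \<noteq> u"
      "costh n (f(u := t)) u < costh n f u" by blast
    then show False using eq by fastforce
  qed
  have costc: "costh n h u = ecc n h u" if "\<forall>a<n. \<forall>b<n. (a,b) \<in> (Adj n h)\<^sup>*" for h u
    unfolding costh_def using ncomp_conn[OF that n0] unfolding ncomp_def by simp
  have cnf: "\<forall>a<n. \<forall>b<n. (a,b) \<in> (Adj n f)\<^sup>*" using cn unfolding conn_def .
  obtain x0 where x0: "x0 < n" "\<And>x. x < n \<Longrightarrow> depth x \<le> depth x0"
  proof -
    have fin: "finite (depth ` {0..<n})" "depth ` {0..<n} \<noteq> {}" using n0 by auto
    obtain x0 where "x0 \<in> {0..<n}" "depth x0 = Max (depth ` {0..<n})"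
      using Max_in[OF fin] by auto
    moreover have "depth x \<le> Max (depth ` {0..<n})" if "x < n" for x
      using Max_ge[OF fin(1)] that by simp
    ultimately show ?thesis using that by auto
  qed
  have Dle: "depth x0 \<le> 2"
  proof (rule ccontr)
    assume "\<not> depth x0 \<le> 2"
    then have "3 \<le> depth x0" by simp
    from D2[OF cn x0(1) x0(2) this] obtain t where t: "t < n" "t \<noteq> x0"
      "ecc n (f(x0 := t)) x0 < ecc n f x0" "\<forall>a<n. \<forall>b<n. (a,b) \<in> (Adj n (f(x0 := t)))\<^sup>*"
      by blast
    have "costh n (f(x0 := t)) x0 < costh n f x0" using costc[OF t(4)] costc[OF cnf] t(3) by simp
    then show False using eq[OF x0(1) t(1,2)] by simp
  qed
  have r0: "root x0 < n" "periodic (root x0)" using root_lt root_periodic x0(1) by auto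
  have L7: "per (root x0) \<le> 7"
  proof (rule ccontr)
    assume "\<not> per (root x0) \<le> 7"
    then have "8 \<le> per (root x0)" by simp
    from D4[OF cn x0(1) x0(2) this] obtain c t where ct: "c < n" "t < n" "t \<noteq> c"
      "ecc n (f(c := t)) c < ecc n f c" "\<forall>a<n. \<forall>b<n. (a,b) \<in> (Adj n (f(c := t)))\<^sup>*"
      by blast
    have "costh n (f(c := t)) c < costh n f c" using costc[OF ct(5)] costc[OF cnf] ct(4) by simp
    then show False using eq[OF ct(1,2,3)] by simp
  qed
  have cardC: "card Cyc = per (root x0)" by (rule card_Cyc[OF cn r0])
  have adj: "adjU n S = Adj n f" by (rule adjU_Adj) (rule Sf1)
  have conU: "connectedU n S" unfolding connectedU_def adj using cn unfolding conn_def .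
  have uniq: "\<exists>!VE. is_cycleU n S (fst VE) (snd VE)"
  proof
    show "is_cycleU n S (fst (Cyc, (\<lambda>v. (v, f v)) ` Cyc)) (snd (Cyc, (\<lambda>v. (v, f v)) ` Cyc))"
      using cycle_exists[OF Sf1 cn r0] by simp
  next
    fix VE assume "is_cycleU n S (fst VE) (snd VE)"
    from cycle_unique[OF Sf1 cn this] show "VE = (Cyc, (\<lambda>v. (v, f v)) ` Cyc)"
      by (metis prod.collapse)
  qed
  have rest: "card V \<le> 7 \<and> (\<forall>v<n. \<exists>c\<in>V. distU n S v c \<le> 2)" if "is_cycleU n S V E" for V E
  proof -
    have V: "V = Cyc" using cycle_unique[OF Sf1 cn that] by simp
    have "\<exists>c\<in>V. distU n S v c \<le> 2" if v: "v < n" for v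
    proof -
      have "root v \<in> V" unfolding V Cyc_def using root_lt root_periodic v by auto
      moreover have "(v, root v) \<in> (Adj n f)^^(depth v)" unfolding root_def
        by (rule walk_fwd[OF v]) simp
      then have "distU n S v (root v) \<le> depth v" unfolding distU_gd adj by (rule gd_le)
      then have "distU n S v (root v) \<le> 2" using x0(2)[OF v] Dle by simp
      ultimately show ?thesis by blast
    qed
    then show ?thesis using V cardC L7 by simp
  qed
  show ?thesis using conU uniq rest by blast
qed


end
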